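(* Let $X$ be a flag simplicial complex with vertex set $S$, let $W$ be the associated right-angled Coxeter group, and suppose that the radius of convergence of the growth series $W(t)$ equals $1$. Then $X$ is the join of a cross-polytope and a simplex.
   Context: Flag: every set of pairwise adjacent vertices is a face. The right-angled Coxeter group of $X$ is $W=\langle S\mid s^2=1\ (s\in S),\ st=ts\ (\{s,t\}\in X)\rangle$. Its growth series is $W(t)=\sum_{w\in W}t^{\ell(w)}$, where $\ell$ is word length with respect to $S$. The join of complexes on disjoint vertex sets is $\{\sigma\cup\tau:\sigma\in X,\tau\in Y\}$; a cross-polytope is the $k$-fold join of the complex with two vertices and no edge; a simplex is the complex of all subsets of a finite set. *)

theory Defs
  imports "HOL-Analysis.Analysis" "HOL-Library.Disjoint_Sets"
begin

definition simplicial_complex :: "'a set \<Rightarrow> 'a set set \<Rightarrow> bool" where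
  "simplicial_complex S X \<longleftrightarrow> finite S \<and> X \<subseteq> Pow S \<and> {} \<in> X \<and>
     (\<forall>\<sigma>\<in>X. \<forall>\<tau>. \<tau> \<subseteq> \<sigma> \<longrightarrow> \<tau> \<in> X) \<and> (\<forall>s\<in>S. {s} \<in> X)"

definition flag_complex :: "'a set \<Rightarrow> 'a set set \<Rightarrow> bool" where
  "flag_complex S X \<longleftrightarrow> simplicial_complex S X \<and>
     (\<forall>\<sigma>. \<sigma> \<subseteq> S \<longrightarrow> (\<forall>s\<in>\<sigma>. \<forall>t\<in>\<sigma>. s \<noteq> t \<longrightarrow> {s, t} \<in> X) \<longrightarrow> \<sigma> \<in> X)"

(* One elementary move on words over S in the presentation
   W = < S | s^2 = 1, st = ts ({s,t} in X) >: insert/delete ss, or swap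
   two adjacent letters spanning an edge. Since all generators are involutions,
   W is the quotient of the free monoid on S by the congruence generated by these moves. *)
definition racg_step :: "'a set \<Rightarrow> 'a set set \<Rightarrow> 'a list \<Rightarrow> 'a list \<Rightarrow> bool" where
  "racg_step S X u v \<longleftrightarrow> (\<exists>p q s t.
      (s \<in> S \<and> u = p @ [s, s] @ q \<and> v = p @ q) \<or>
      (s \<in> S \<and> u = p @ q \<and> v = p @ [s, s] @ q) \<or>
      ({s, t} \<in> X \<and> u = p @ [s, t] @ q \<and> v = p @ [t, s] @ q))"

definition racg_equiv :: "'a set \<Rightarrow> 'a set set \<Rightarrow> 'a list \<Rightarrow> 'a list \<Rightarrow> bool" where
  "racg_equiv S X = (racg_step S X)\<^sup>*\<^sup>*"

definition racg_elem :: "'a set \<Rightarrow> 'a set set \<Rightarrow> 'a list \<Rightarrow> 'a list set" where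
  "racg_elem S X w = {v \<in> lists S. racg_equiv S X w v}"

definition racg :: "'a set \<Rightarrow> 'a set set \<Rightarrow> 'a list set set" where
  "racg S X = racg_elem S X ` lists S"

definition racg_length :: "'a list set \<Rightarrow> nat" where
  "racg_length g = (LEAST n. \<exists>w\<in>g. length w = n)"

(* n-th coefficient of the growth series W(t) = sum_{w in W} t^{l(w)}. *)
definition growth_coeff :: "'a set \<Rightarrow> 'a set set \<Rightarrow> nat \<Rightarrow> nat" where
  "growth_coeff S X n = card {g \<in> racg S X. racg_length g = n}"

(* Join of complexes (on disjoint vertex sets). *)
definition join_complex :: "'a set set \<Rightarrow> 'a set set \<Rightarrow> 'a set set" where
  "join_complex X Y = {\<sigma> \<union> \<tau> | \<sigma> \<tau>. \<sigma> \<in> X \<and> \<tau> \<in> Y}"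

(* Cross-polytope: the join of the k two-vertex edgeless complexes {{},{a},{b}}
   for the pairs {a,b} in P; its faces are the subsets of the union of P
   containing at most one vertex of each pair. *)
definition cross_polytope :: "'a set set \<Rightarrow> 'a set set" where
  "cross_polytope P = {\<sigma>. \<sigma> \<subseteq> \<Union>P \<and> (\<forall>p\<in>P. \<not> p \<subseteq> \<sigma>)}"

definition full_simplex :: "'a set \<Rightarrow> 'a set set" where
  "full_simplex B = Pow B"

end

theory Submission
  imports Defs
begin



lemma racg_step_sym: "racg_step S X u v \<Longrightarrow> racg_step S X v u"
proof -
  assume "racg_step S X u v"
  then obtain p q s t where
    "(s \<in> S \<and> u = p @ [s, s] @ q \<and> v = p @ q) \<or>
      (s \<in> S \<and> u = p @ q \<and> v = p @ [s, s] @ q) \<or>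
      ({s, t} \<in> X \<and> u = p @ [s, t] @ q \<and> v = p @ [t, s] @ q)"
    unfolding racg_step_def by blast
  then show ?thesis
  proof (elim disjE)
    assume h: "{s, t} \<in> X \<and> u = p @ [s, t] @ q \<and> v = p @ [t, s] @ q"
    then have "{t, s} \<in> X" by (simp add: insert_commute)
    then show ?thesis using h unfolding racg_step_def by blast
  qed (auto simp: racg_step_def)
qed

lemma racg_equiv_sym: "racg_equiv S X u v \<Longrightarrow> racg_equiv S X v u"
  unfolding racg_equiv_def
proof (induction rule: rtranclp_induct)
  case base then show ?case by simp
next
  case (step y z)
  then show ?case using racg_step_sym
    by (metis converse_rtranclp_into_rtranclp)
qed

lemma racg_equiv_trans: "racg_equiv S X u v \<Longrightarrow> racg_equiv S X v w \<Longrightarrow> racg_equiv S X u w"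
  unfolding racg_equiv_def by simp

lemma racg_equiv_refl: "racg_equiv S X u u"
  unfolding racg_equiv_def by simp

lemma racg_equiv_step: "racg_step S X u v \<Longrightarrow> racg_equiv S X u v"
  unfolding racg_equiv_def by simp

lemma racg_elem_eq:
  assumes "racg_equiv S X w v" shows "racg_elem S X w = racg_elem S X v"
  unfolding racg_elem_def using assms racg_equiv_sym racg_equiv_trans by blast

lemma in_racg_elem: "w \<in> lists S \<Longrightarrow> w \<in> racg_elem S X w"
  unfolding racg_elem_def using racg_equiv_refl by blast

lemma racg_length_le: "w \<in> g \<Longrightarrow> racg_length g \<le> length w"
  unfolding racg_length_def by (rule Least_le) blast

lemma racg_length_ge:
  assumes "w \<in> g" "\<And>v. v \<in> g \<Longrightarrow> m \<le> length v" shows "m \<le> racg_length g"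
proof -
  have "\<exists>v\<in>g. length v = racg_length g"
    unfolding racg_length_def by (rule LeastI_ex) (use assms in blast)
  then obtain v where "v \<in> g" "length v = racg_length g" by blast
  then show ?thesis using assms(2)[of v] by simp
qed

lemma level_finite:
  assumes "finite S"
  shows "finite {g \<in> racg S X. racg_length g = n}"
proof -
  have "{g \<in> racg S X. racg_length g = n} \<subseteq> racg_elem S X ` {w. set w \<subseteq> S \<and> length w = n}"
  proof
    fix g assume "g \<in> {g \<in> racg S X. racg_length g = n}"
    then obtain w0 where w0: "w0 \<in> lists S" "g = racg_elem S X w0" and len: "racg_length g = n"
      unfolding racg_def by auto
    have w0g: "w0 \<in> g" using w0 in_racg_elem by simp
    have "\<exists>v\<in>g. length v = racg_length g"
      unfolding racg_length_def by (rule LeastI_ex) (use w0g in blast)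
    then obtain v where v: "v \<in> g" "length v = n" using len by auto
    then have "v \<in> lists S" "racg_equiv S X w0 v" using w0 unfolding racg_elem_def by auto
    then have "g = racg_elem S X v" using w0 racg_elem_eq by metis
    then show "g \<in> racg_elem S X ` {w. set w \<subseteq> S \<and> length w = n}"
      using v \<open>v \<in> lists S\<close> by auto
  qed
  then show ?thesis by (rule finite_subset) (rule finite_imageI[OF finite_lists_length_eq[OF assms]])
qed



type_synonym v4 = "bool \<times> bool"

definition vz :: v4 where "vz = (False, False)"
definition vx :: "v4 \<Rightarrow> v4 \<Rightarrow> v4" where "vx a b = (fst a \<noteq> fst b, snd a \<noteq> snd b)"
definition wt :: "v4 \<Rightarrow> nat" where "wt a = of_bool (fst a) + of_bool (snd a)"

fun sact :: "v4 list \<Rightarrow> v4 list" where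
  "sact (v # w # r) = (if v = vz then w # r else vz # v # w # r)"
| "sact L = vz # L"

fun vact :: "v4 \<Rightarrow> v4 list \<Rightarrow> v4 list" where
  "vact x (v # r) = vx x v # r"
| "vact x [] = [x]"

fun wfv :: "v4 list \<Rightarrow> bool" where
  "wfv (v # w # r) = ((r \<noteq> [] \<longrightarrow> w \<noteq> vz) \<and> wfv (w # r))"
| "wfv [v] = True"
| "wfv [] = False"

definition msr :: "v4 list \<Rightarrow> nat" where
  "msr L = sum_list (map wt L) + length L - 1"

lemma sact_wf: "wfv L \<Longrightarrow> wfv (sact L)"
  by (induction L rule: sact.induct) auto

lemma sact_sact: "wfv L \<Longrightarrow> sact (sact L) = L"
proof (induction L rule: sact.induct)
  case (1 v w r)
  then show ?case by (cases r) (auto simp: vz_def)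
qed auto

lemma vact_wf: "wfv L \<Longrightarrow> wfv (vact x L)"
  by (cases L rule: wfv.cases) auto

lemma vx_idem: "vx x (vx x v) = v" by (cases x; cases v) (auto simp: vx_def)
lemma vx_comm: "vx x (vx y v) = vx y (vx x v)" by (auto simp: vx_def)

lemma vact_vact: "wfv L \<Longrightarrow> vact x (vact x L) = L"
  by (cases L) (auto simp: vx_idem)

lemma vact_comm: "vact x (vact y L) = vact y (vact x L)"
  by (cases L) (auto simp: vx_comm, auto simp: vx_def)

lemma msr_sact: "wfv L \<Longrightarrow> msr (sact L) \<le> msr L + 1"
  by (cases L rule: sact.cases) (auto simp: msr_def wt_def vz_def)

lemma msr_vact: "wfv L \<Longrightarrow> x \<in> {(True,False),(False,True)} \<Longrightarrow> msr (vact x L) \<le> msr L + 1"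
  by (cases L) (auto simp: msr_def wt_def vx_def)

definition act :: "'a \<Rightarrow> 'a \<Rightarrow> 'a \<Rightarrow> 'a \<Rightarrow> v4 list \<Rightarrow> v4 list" where
  "act s t u x = (if x = s then sact else if x = t then vact (True, False)
      else if x = u then vact (False, True) else id)"

definition FF :: "'a \<Rightarrow> 'a \<Rightarrow> 'a \<Rightarrow> 'a list \<Rightarrow> v4 list" where
  "FF s t u w = foldl (\<lambda>L x. act s t u x L) [vz] w"

lemma act_wf: "wfv L \<Longrightarrow> wfv (act s t u x L)"
  by (auto simp: act_def sact_wf vact_wf)

lemma act_msr: "wfv L \<Longrightarrow> msr (act s t u x L) \<le> msr L + 1"
  using msr_sact[of L] msr_vact[of L "(True,False)"] msr_vact[of L "(False,True)"]
  by (auto simp: act_def)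

lemma act_invol: "wfv L \<Longrightarrow> act s t u x (act s t u x L) = L"
  by (auto simp: act_def sact_sact vact_vact)

lemma foldl_wf: "wfv L \<Longrightarrow> wfv (foldl (\<lambda>L x. act s t u x L) L w)"
  by (induction w arbitrary: L) (auto simp: act_wf)

lemma foldl_msr: "wfv L \<Longrightarrow> msr (foldl (\<lambda>L x. act s t u x L) L w) \<le> msr L + length w"
proof (induction w arbitrary: L)
  case (Cons a w)
  have w1: "wfv (act s t u a L)" using act_wf Cons.prems .
  have "msr (foldl (\<lambda>L x. act s t u x L) (act s t u a L) w) \<le> msr (act s t u a L) + length w"
    using Cons.IH[OF w1] .
  moreover have "msr (act s t u a L) \<le> msr L + 1" by (rule act_msr[OF Cons.prems])
  ultimately have "msr (foldl (\<lambda>L x. act s t u x L) (act s t u a L) w) \<le> msr L + Suc (length w)"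
    by linarith
  then show ?case by (simp only: foldl_Cons length_Cons)
qed simp

lemma FF_wf: "wfv (FF s t u w)"
  unfolding FF_def by (rule foldl_wf) simp

lemma FF_msr: "msr (FF s t u w) \<le> length w"
  unfolding FF_def using foldl_msr[of "[vz]" s t u w] by (simp add: msr_def wt_def vz_def)

lemma FF_step:
  assumes "racg_step S X w1 w2" "s \<noteq> t" "s \<noteq> u" "t \<noteq> u" "{s,t} \<notin> X" "{s,u} \<notin> X"
  shows "FF s t u w1 = FF s t u w2"
proof -
  let ?f = "\<lambda>L x. act s t u x L"
  let ?L0 = "[vz]"
  obtain p q a b where
    c: "(w1 = p @ [a, a] @ q \<and> w2 = p @ q) \<or> (w1 = p @ q \<and> w2 = p @ [a, a] @ q) \<or>
        ({a, b} \<in> X \<and> w1 = p @ [a, b] @ q \<and> w2 = p @ [b, a] @ q)"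
    using assms(1) unfolding racg_step_def by blast
  have wp: "wfv (foldl ?f ?L0 p)" by (rule foldl_wf) simp
  have comm: "act s t u a (act s t u b L) = act s t u b (act s t u a L)" if "{a,b} \<in> X" for L
  proof -
    have "{a,b} \<noteq> {s,t}" "{a,b} \<noteq> {s,u}" using that assms by auto
    then show ?thesis using assms(2-4)
      by (cases "a = b") (auto simp: act_def vact_comm doubleton_eq_iff)
  qed
  from c show ?thesis
  proof (elim disjE conjE)
    assume "w1 = p @ [a, a] @ q" "w2 = p @ q"
    then show ?thesis unfolding FF_def using act_invol[OF wp, of s t u a] by simp
  next
    assume "w1 = p @ q" "w2 = p @ [a, a] @ q"
    then show ?thesis unfolding FF_def using act_invol[OF wp, of s t u a] by simp
  next
    assume "{a, b} \<in> X" "w1 = p @ [a, b] @ q" "w2 = p @ [b, a] @ q"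
    then show ?thesis unfolding FF_def using comm by simp
  qed
qed

lemma FF_equiv:
  assumes "racg_equiv S X w1 w2" "s \<noteq> t" "s \<noteq> u" "t \<noteq> u" "{s,t} \<notin> X" "{s,u} \<notin> X"
  shows "FF s t u w1 = FF s t u w2"
  using assms(1) unfolding racg_equiv_def
  by (induction rule: rtranclp_induct) (use FF_step[OF _ assms(2-6)] in auto)

definition code :: "bool \<Rightarrow> v4" where "code b = (if b then (True, False) else (False, True))"

definition WW :: "'a \<Rightarrow> 'a \<Rightarrow> 'a \<Rightarrow> bool list \<Rightarrow> 'a list" where
  "WW s t u bs = concat (map (\<lambda>b. [if b then t else u, s]) bs)"

lemma foldl_WW:
  assumes "s \<noteq> t" "s \<noteq> u" "t \<noteq> u"
  shows "foldl (\<lambda>L x. act s t u x L) (vz # r) (WW s t u bs) = vz # (rev (map code bs) @ r)"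
proof (induction bs arbitrary: r)
  case Nil then show ?case by (simp add: WW_def)
next
  case (Cons b bs)
  have "foldl (\<lambda>L x. act s t u x L) (vz # r) [if b then t else u, s] = vz # code b # r"
    using assms by (cases r) (auto simp: act_def code_def vx_def vz_def)
  then have "foldl (\<lambda>L x. act s t u x L) (vz # r) (WW s t u (b # bs))
      = foldl (\<lambda>L x. act s t u x L) (vz # code b # r) (WW s t u bs)"
    by (simp add: WW_def)
  also have "\<dots> = vz # (rev (map code bs) @ code b # r)" by (rule Cons.IH)
  finally show ?case by simp
qed

lemma FF_WW:
  assumes "s \<noteq> t" "s \<noteq> u" "t \<noteq> u"
  shows "FF s t u (WW s t u bs) = vz # rev (map code bs)"
  using foldl_WW[OF assms, of "[]" bs] by (simp add: FF_def)

lemma length_WW: "length (WW s t u bs) = 2 * length bs"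
  by (induction bs) (auto simp: WW_def)

lemma msr_FF_WW:
  assumes "s \<noteq> t" "s \<noteq> u" "t \<noteq> u"
  shows "msr (FF s t u (WW s t u bs)) = 2 * length bs"
proof -
  have "sum_list (map wt (map code bs)) = length bs"
    by (induction bs) (auto simp: wt_def code_def)
  then show ?thesis using FF_WW[OF assms] by (simp add: msr_def wt_def vz_def rev_map[symmetric] sum_list_rev)
qed



lemma set_WW: "set (WW s t u bs) \<subseteq> {s,t,u}"
  by (induction bs) (auto simp: WW_def)

lemma exp_growth:
  assumes fin: "finite S" and S: "s \<in> S" "t \<in> S" "u \<in> S"
    and d: "s \<noteq> t" "s \<noteq> u" "t \<noteq> u" "{s,t} \<notin> X" "{s,u} \<notin> X"
  shows "2 ^ k \<le> growth_coeff S X (2 * k)"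
proof -
  let ?A = "{bs :: bool list. set bs \<subseteq> UNIV \<and> length bs = k}"
  let ?g = "\<lambda>bs. racg_elem S X (WW s t u bs)"
  have WWS: "WW s t u bs \<in> lists S" for bs using set_WW[of s t u bs] S by auto
  have len: "racg_length (?g bs) = 2 * length bs" for bs
  proof (rule antisym)
    show "racg_length (?g bs) \<le> 2 * length bs"
      using racg_length_le[OF in_racg_elem[OF WWS]] length_WW by metis
    show "2 * length bs \<le> racg_length (?g bs)"
    proof (rule racg_length_ge[OF in_racg_elem[OF WWS]])
      fix v assume "v \<in> ?g bs"
      then have "racg_equiv S X (WW s t u bs) v" unfolding racg_elem_def by auto
      then have "FF s t u v = FF s t u (WW s t u bs)" using FF_equiv[OF _ d] by metis
      then show "2 * length bs \<le> length v" using FF_msr[of s t u v] msr_FF_WW[OF d(1-3)] by metis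
    qed
  qed
  have sub: "?g ` ?A \<subseteq> {g \<in> racg S X. racg_length g = 2 * k}"
    using len WWS unfolding racg_def by auto
  have inj: "inj_on ?g ?A"
  proof
    fix b1 b2 assume "b1 \<in> ?A" "b2 \<in> ?A" "?g b1 = ?g b2"
    then have "WW s t u b2 \<in> ?g b1" using in_racg_elem[OF WWS] by metis
    then have "racg_equiv S X (WW s t u b1) (WW s t u b2)" unfolding racg_elem_def by auto
    then have "FF s t u (WW s t u b1) = FF s t u (WW s t u b2)" using FF_equiv[OF _ d] by metis
    then have "map code b1 = map code b2" using FF_WW[OF d(1-3)] by simp
    moreover have "inj code" unfolding inj_def code_def by auto
    ultimately show "b1 = b2" by (simp add: inj_map_eq_map)
  qed
  have "card ?A = 2 ^ k" using card_lists_length_eq[of "UNIV :: bool set" k] by simp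
  then have "card (?g ` ?A) = 2 ^ k" using card_image[OF inj] by simp
  then show ?thesis unfolding growth_coeff_def
    using card_mono[OF level_finite[OF fin] sub] by simp
qed

lemma conv_radius_small:
  fixes a :: "nat \<Rightarrow> nat"
  assumes "\<And>k. 2 ^ k \<le> a (2 * k)"
  shows "conv_radius (\<lambda>n. real (a n)) < 1"
proof -
  define z :: real where "z = sqrt (1/2)"
  have z: "z ^ 2 = 1/2" "0 < z" "z < 1" unfolding z_def by (auto simp: real_sqrt_lt_1_iff)
  have ns: "\<not> summable (\<lambda>n. norm (real (a n) * z ^ n))"
  proof
    assume "summable (\<lambda>n. norm (real (a n) * z ^ n))"
    then have "(\<lambda>n. norm (real (a n) * z ^ n)) \<longlonglongrightarrow> 0" by (rule summable_LIMSEQ_zero)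
    then have "eventually (\<lambda>n. norm (real (a n) * z ^ n) < 1) sequentially"
      by (rule order_tendstoD) simp
    then obtain N where N: "\<And>n. n \<ge> N \<Longrightarrow> norm (real (a n) * z ^ n) < 1"
      unfolding eventually_sequentially by blast
    have "z ^ (2 * N) = (1/2) ^ N" by (simp add: power_mult z(1))
    then have h2: "(2::real) ^ N * z ^ (2 * N) = 1" by (simp add: power_mult_distrib[symmetric])
    have "real (2 ^ N) \<le> real (a (2 * N))" by (simp only: of_nat_le_iff) (rule assms)
    then have h1: "(2::real) ^ N \<le> real (a (2 * N))" by simp
    have "(2::real) ^ N * z ^ (2 * N) \<le> real (a (2 * N)) * z ^ (2 * N)"
      by (rule mult_right_mono[OF h1]) (use z in simp)
    then have "1 \<le> real (a (2 * N)) * z ^ (2 * N)" using h2 by simp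
    moreover have "norm (real (a (2 * N)) * z ^ (2 * N)) < 1" using N[of "2*N"] by simp
    ultimately show False using z by simp
  qed
  have "conv_radius (\<lambda>n. real (a n)) \<le> ereal (norm z)" by (rule conv_radius_leI[OF ns])
  also have "\<dots> < 1" using z by simp
  finally show ?thesis .
qed



lemma move_right:
  assumes all: "\<forall>x\<in>S. \<forall>y\<in>S. {x,y} \<in> X" and a: "a \<in> S" and q: "set q \<subseteq> S"
  shows "racg_equiv S X (p @ [a] @ q @ r) (p @ q @ [a] @ r)"
  using q
proof (induction q arbitrary: p)
  case Nil then show ?case by (simp add: racg_equiv_refl)
next
  case (Cons x q)
  have "racg_step S X (p @ [a, x] @ (q @ r)) (p @ [x, a] @ (q @ r))"
  proof -
    have "{a,x} \<in> X" using all a Cons.prems by simp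
    then show ?thesis unfolding racg_step_def by blast
  qed
  then have 1: "racg_equiv S X (p @ [a] @ (x # q) @ r) ((p @ [x]) @ [a] @ q @ r)"
    using racg_equiv_step by fastforce
  have qS: "set q \<subseteq> S" using Cons.prems by simp
  have "racg_equiv S X ((p @ [x]) @ [a] @ q @ r) ((p @ [x]) @ q @ [a] @ r)"
    by (rule Cons.IH[OF qS])
  then show ?case using racg_equiv_trans[OF 1] by simp
qed

lemma reduce_distinct:
  assumes all: "\<forall>x\<in>S. \<forall>y\<in>S. {x,y} \<in> X"
  shows "w \<in> lists S \<Longrightarrow> \<exists>v \<in> lists S. distinct v \<and> racg_equiv S X w v"
proof (induction "length w" arbitrary: w rule: less_induct)
  case less
  show ?case
  proof (cases "distinct w")
    case True then show ?thesis using less.prems racg_equiv_refl by blast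
  next
    case False
    then obtain p a q r where w: "w = p @ [a] @ q @ [a] @ r"
      using not_distinct_decomp by blast
    have aS: "a \<in> S" and qS: "set q \<subseteq> S" using less.prems w by auto
    have 1: "racg_equiv S X w (p @ q @ [a] @ [a] @ r)"
      using move_right[OF all aS qS, of p "[a] @ r"] w by simp
    have "racg_step S X ((p @ q) @ [a, a] @ r) ((p @ q) @ r)"
      unfolding racg_step_def using aS by blast
    then have 2: "racg_equiv S X w (p @ q @ r)"
      using racg_equiv_trans[OF 1 racg_equiv_step] by simp
    have "length (p @ q @ r) < length w" "p @ q @ r \<in> lists S" using w less.prems by auto
    then obtain v where "v \<in> lists S" "distinct v" "racg_equiv S X (p @ q @ r) v"
      using less.hyps by blast
    then show ?thesis using racg_equiv_trans[OF 2] by blast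
  qed
qed

lemma finite_case:
  assumes fin: "finite S" and all: "\<forall>x\<in>S. \<forall>y\<in>S. {x,y} \<in> X"
  shows "conv_radius (\<lambda>n. real (growth_coeff S X n)) = \<infinity>"
proof -
  have bound: "racg_length g \<le> card S" if gW: "g \<in> racg S X" for g
  proof -
    obtain w where w: "w \<in> lists S" "g = racg_elem S X w" using gW unfolding racg_def by auto
    then obtain v where v: "v \<in> lists S" "distinct v" "racg_equiv S X w v"
      using reduce_distinct[OF all] by blast
    then have "v \<in> g" using w unfolding racg_elem_def by auto
    then have "racg_length g \<le> length v" by (rule racg_length_le)
    also have "\<dots> = card (set v)" using v distinct_card by metis
    also have "\<dots> \<le> card S" using v fin by (intro card_mono) auto
    finally show ?thesis .
  qed
  have "eventually (\<lambda>n. real (growth_coeff S X n) = 0) sequentially"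
    unfolding eventually_sequentially
  proof (intro exI allI impI)
    fix n assume "Suc (card S) \<le> n"
    then have hE: "{g \<in> racg S X. racg_length g = n} = {}" using bound by force
    show "real (growth_coeff S X n) = 0" unfolding growth_coeff_def hE by simp
  qed
  then have "conv_radius (\<lambda>n. real (growth_coeff S X n)) = conv_radius (\<lambda>_. 0 :: real)"
    by (rule conv_radius_cong')
  then show ?thesis by simp
qed



theorem proposition3p4p5:
  fixes S :: "'a set" and X :: "'a set set"
  assumes "flag_complex S X"
    and "conv_radius (\<lambda>n. real (growth_coeff S X n)) = 1"
  shows "\<exists>P B. finite P \<and> P \<noteq> {} \<and> (\<forall>p\<in>P. card p = 2) \<and> disjoint P \<and>
           finite B \<and> \<Union>P \<inter> B = {} \<and> \<Union>P \<union> B = S \<and>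
           X = join_complex (cross_polytope P) (full_simplex B)"
proof -
  have fin: "finite S" and XS: "X \<subseteq> Pow S" and down: "\<And>\<sigma> \<tau>. \<sigma> \<in> X \<Longrightarrow> \<tau> \<subseteq> \<sigma> \<Longrightarrow> \<tau> \<in> X"
    and sing: "\<And>s. s \<in> S \<Longrightarrow> {s} \<in> X"
    and flag: "\<And>\<sigma>. \<sigma> \<subseteq> S \<Longrightarrow> (\<forall>s\<in>\<sigma>. \<forall>t\<in>\<sigma>. s \<noteq> t \<longrightarrow> {s, t} \<in> X) \<Longrightarrow> \<sigma> \<in> X"
    using assms(1) unfolding flag_complex_def simplicial_complex_def by blast+
  have H: "t = u" if "s \<in> S" "t \<in> S" "u \<in> S" "{s,t} \<notin> X" "{s,u} \<notin> X" for s t u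
  proof (rule ccontr)
    assume "t \<noteq> u"
    moreover have "s \<noteq> t" "s \<noteq> u" using that sing by auto
    ultimately have "\<And>k. 2 ^ k \<le> growth_coeff S X (2 * k)"
      using exp_growth[OF fin that(1-3)] that by blast
    then have "conv_radius (\<lambda>n. real (growth_coeff S X n)) < 1" by (rule conv_radius_small)
    then show False using assms(2) by simp
  qed
  have ne: "\<exists>x\<in>S. \<exists>y\<in>S. {x,y} \<notin> X"
  proof (rule ccontr)
    assume "\<not> ?thesis"
    then have "conv_radius (\<lambda>n. real (growth_coeff S X n)) = \<infinity>" using finite_case[OF fin] by blast
    then show False using assms(2) by simp
  qed
  define P where "P = {{a,b} | a b. a \<in> S \<and> b \<in> S \<and> {a,b} \<notin> X}"
  define B where "B = S - \<Union>P"
  have PS: "\<Union>P \<subseteq> S" unfolding P_def by auto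
  have "finite P"
  proof (rule finite_subset)
    show "P \<subseteq> Pow S" using PS by auto
  qed (use fin in simp)
  moreover have "P \<noteq> {}" using ne unfolding P_def by blast
  moreover have "\<forall>p\<in>P. card p = 2"
  proof
    fix p assume "p \<in> P"
    then obtain a b where "p = {a,b}" "a \<in> S" "{a,b} \<notin> X" unfolding P_def by blast
    moreover then have "a \<noteq> b" using sing by auto
    ultimately show "card p = 2" by simp
  qed
  moreover have "disjoint P"
    unfolding pairwise_def
  proof (intro allI impI ballI)
    fix p q assume "p \<in> P" "q \<in> P" "p \<noteq> q"
    then obtain a b c d where pq: "p = {a,b}" "q = {c,d}" "a \<in> S" "b \<in> S" "c \<in> S" "d \<in> S"
      "{a,b} \<notin> X" "{c,d} \<notin> X" unfolding P_def by blast
    show "disjnt p q"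
    proof (rule ccontr)
      assume "\<not> disjnt p q"
      then have "a = c \<or> a = d \<or> b = c \<or> b = d" using pq unfolding disjnt_def by auto
      moreover have key: "\<And>x y z. x \<in> S \<Longrightarrow> y \<in> S \<Longrightarrow> z \<in> S \<Longrightarrow> {x,y} \<notin> X \<Longrightarrow> {x,z} \<notin> X \<Longrightarrow> {x,y} = {x,z}"
        using H by blast
      moreover have "{b,a} \<notin> X" "{d,c} \<notin> X" using pq by (simp_all add: insert_commute)
      ultimately have "p = q"
      proof (elim disjE)
        assume "a = c" then show "p = q" using key[of a b d] pq by simp
      next
        assume "a = d" then show "p = q" using key[of a b c] pq \<open>{d,c} \<notin> X\<close> by (simp add: insert_commute)
      next
        assume "b = c" then show "p = q" using key[of b a d] pq \<open>{b,a} \<notin> X\<close> by (simp add: insert_commute)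
      next
        assume "b = d" then show "p = q" using key[of b a c] pq \<open>{b,a} \<notin> X\<close> \<open>{d,c} \<notin> X\<close> by (simp add: insert_commute)
      qed
      then show False using \<open>p \<noteq> q\<close> by simp
    qed
  qed
  moreover have "finite B" using fin unfolding B_def by simp
  moreover have "\<Union>P \<inter> B = {}" "\<Union>P \<union> B = S" using PS unfolding B_def by auto
  moreover have "X = join_complex (cross_polytope P) (full_simplex B)"
  proof
    show "X \<subseteq> join_complex (cross_polytope P) (full_simplex B)"
    proof
      fix \<sigma> assume s: "\<sigma> \<in> X"
      then have sS: "\<sigma> \<subseteq> S" using XS by auto
      have "\<sigma> \<inter> \<Union>P \<in> cross_polytope P"
        unfolding cross_polytope_def
      proof (intro CollectI conjI ballI)
        fix p assume "p \<in> P"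
        then obtain a b where "p = {a,b}" "{a,b} \<notin> X" unfolding P_def by blast
        then show "\<not> p \<subseteq> \<sigma> \<inter> \<Union>P" using down[OF s] by blast
      qed auto
      moreover have "\<sigma> \<inter> B \<in> full_simplex B" unfolding full_simplex_def by auto
      moreover have "\<sigma> = (\<sigma> \<inter> \<Union>P) \<union> (\<sigma> \<inter> B)" using sS unfolding B_def by auto
      ultimately show "\<sigma> \<in> join_complex (cross_polytope P) (full_simplex B)"
        unfolding join_complex_def by blast
    qed
  next
    show "join_complex (cross_polytope P) (full_simplex B) \<subseteq> X"
    proof
      fix \<rho> assume "\<rho> \<in> join_complex (cross_polytope P) (full_simplex B)"
      then obtain \<sigma> \<tau> where r: "\<rho> = \<sigma> \<union> \<tau>" "\<sigma> \<subseteq> \<Union>P" "\<forall>p\<in>P. \<not> p \<subseteq> \<sigma>" "\<tau> \<subseteq> B"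
        unfolding join_complex_def cross_polytope_def full_simplex_def by blast
      have rS: "\<rho> \<subseteq> S" using r PS unfolding B_def by auto
      show "\<rho> \<in> X"
      proof (rule flag[OF rS], intro ballI impI)
        fix x y assume xy: "x \<in> \<rho>" "y \<in> \<rho>" "x \<noteq> y"
        show "{x,y} \<in> X"
        proof (rule ccontr)
          assume nx: "{x,y} \<notin> X"
          then have inP: "{x,y} \<in> P" using xy rS unfolding P_def by blast
          then have "x \<notin> B" "y \<notin> B" unfolding B_def by auto
          then have "x \<in> \<sigma>" "y \<in> \<sigma>" using xy r by auto
          then show False using r(3) inP by auto
        qed
      qed
    qed
  qed
  ultimately show ?thesis by blast
qed


end
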